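(* Let $n_1,\dots,n_N\ge1$, $n=\sum_{i=1}^Nn_i$, and $\epsilon_i>0$ for $i=1,\dots,N$. Let $p_c:\mathbb R^n\to\mathbb R$ be the density of the uniform distribution on $\prod_{i=1}^NC_{n_i}(0,\epsilon_i)$, i.e. $p_c(z)=\frac{1}{2^n\prod_{i=1}^N\epsilon_i^{n_i}}$ for $z\in\prod_{i=1}^NC_{n_i}(0,\epsilon_i)$ and $p_c(z)=0$ otherwise. Then for all $x,y\in\mathbb R^n$, $$\int_{\mathbb R^n}|p_c(u-x)-p_c(u-y)|\,du\le\frac{\sqrt n}{\min_{1\le i\le N}\epsilon_i}\|x-y\|.$$
   Context: $C_m(x,\rho)=\{y\in\mathbb R^m:\|y-x\|_\infty\le\rho\}$ is the cube centered at $x$ with edge length $2\rho$ and edges along the coordinate axes; $\|\cdot\|$ is the Euclidean norm. *)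

theory Defs
  imports "HOL-Analysis.Analysis"
begin

text \<open>Coordinates of R^n are indexed by the finite type 'n; the map blk assigns each
coordinate to its block i < N, so n_i = card {j. blk j = i} and n = CARD('n).
The product of cubes prod_i C_{n_i}(0, eps_i) is the set of z with
abs (z $ j) <= eps (blk j) for every coordinate j.\<close>

definition cube_product :: "('n::finite \<Rightarrow> nat) \<Rightarrow> (nat \<Rightarrow> real) \<Rightarrow> (real^'n) set" where
  "cube_product blk eps = {z. \<forall>j. \<bar>z $ j\<bar> \<le> eps (blk j)}"

definition cube_density ::
  "('n::finite \<Rightarrow> nat) \<Rightarrow> nat \<Rightarrow> (nat \<Rightarrow> real) \<Rightarrow> real^'n \<Rightarrow> real" where
  "cube_density blk N eps z =
     (if z \<in> cube_product blk eps
      then 1 / (2 ^ CARD('n) * (\<Prod>i<N. eps i ^ card {j. blk j = i}))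
      else 0)"

end

theory Submission
  imports Defs
begin

lemma one_minus_prod_le_sum:
  fixes a :: "'a \<Rightarrow> real"
  assumes "finite S" "\<And>j. j \<in> S \<Longrightarrow> 0 \<le> a j \<and> a j \<le> 1"
  shows "1 - (\<Prod>j\<in>S. 1 - a j) \<le> (\<Sum>j\<in>S. a j)"
  using assms
proof (induction S rule: finite_induct)
  case empty then show ?case by simp
next
  case (insert k S)
  let ?P = "\<Prod>j\<in>S. 1 - a j"
  have P0: "0 \<le> ?P" using insert by (intro prod_nonneg) auto
  have P1: "?P \<le> 1" using insert by (intro prod_le_1) auto
  have ak: "0 \<le> a k" "a k \<le> 1" using insert by auto
  have IH: "1 - ?P \<le> (\<Sum>j\<in>S. a j)" using insert by auto
  have "1 - (\<Prod>j\<in>insert k S. 1 - a j) = (1 - ?P) + a k * ?P"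
    using insert by (simp add: algebra_simps)
  also have "\<dots> \<le> (\<Sum>j\<in>S. a j) + a k"
    using IH ak P0 P1 by (smt (verit) mult_left_le)
  finally show ?case using insert by simp
qed

lemma sum_abs_le_sqrt_card_norm:
  fixes d :: "real^'n::finite"
  shows "(\<Sum>j\<in>UNIV. \<bar>d $ j\<bar>) \<le> sqrt (real CARD('n)) * norm d"
proof -
  let ?a = "\<chi> j. \<bar>d $ j\<bar>"
  let ?o = "(\<chi> j. 1) :: real^'n"
  have "?a \<bullet> ?o = (\<Sum>j\<in>UNIV. \<bar>d $ j\<bar>)" by (simp add: inner_vec_def)
  moreover have "?a \<bullet> ?o \<le> norm ?a * norm ?o" by (rule order_trans[OF abs_ge_self Cauchy_Schwarz_ineq2])
  moreover have "norm ?a = norm d" by (simp add: norm_vec_def)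
  moreover have "norm ?o = sqrt (real CARD('n))" by (simp add: norm_vec_def L2_set_def)
  ultimately show ?thesis by (simp add: mult.commute)
qed

theorem lemma8:
  fixes blk :: "'n::finite \<Rightarrow> nat" and N :: nat and eps :: "nat \<Rightarrow> real"
    and x y :: "real^'n"
  assumes blocks: "range blk = {..<N}"
    and eps_pos: "\<forall>i<N. eps i > 0"
  shows "(LINT u|lborel. \<bar>cube_density blk N eps (u - x) - cube_density blk N eps (u - y)\<bar>)
           \<le> sqrt (real CARD('n)) / Min (eps ` {..<N}) * norm (x - y)"
proof -
  define e :: "real^'n" where "e = (\<chi> j. eps (blk j))"
  have blkN: "blk j < N" for j using blocks by auto
  have epos: "e $ j > 0" for j using eps_pos blkN by (simp add: e_def)
  define m where "m = Min (eps ` {..<N})"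
  have ne: "{..<N} \<noteq> {}" using blkN by blast
  have m_in: "m \<in> eps ` {..<N}" unfolding m_def using ne by (intro Min_in) auto
  have mpos: "m > 0" using m_in eps_pos by auto
  have m_le: "m \<le> e $ j" for j unfolding m_def e_def using blkN by (intro Min_le) auto
  define V where "V = (\<Prod>j\<in>UNIV. 2 * e $ j)"
  have Vpos: "V > 0" unfolding V_def using epos by (intro prod_pos) auto
  have prod_e: "(\<Prod>j\<in>UNIV. e $ j) = (\<Prod>i<N. eps i ^ card {j. blk j = i})"
  proof -
    have "(\<Prod>j\<in>UNIV. e $ j) = (\<Prod>i<N. \<Prod>j\<in>{j. j \<in> UNIV \<and> blk j = i}. e $ j)"
      using blocks by (intro prod.group[symmetric]) auto
    also have "\<dots> = (\<Prod>i<N. eps i ^ card {j. blk j = i})"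
      by (intro prod.cong refl) (simp add: e_def)
    finally show ?thesis .
  qed
  have V_eq: "V = 2 ^ CARD('n) * (\<Prod>i<N. eps i ^ card {j. blk j = i})"
    unfolding V_def prod.distrib prod_e by simp
  define c where "c = 1 / V"
  have cpos: "c > 0" using Vpos by (simp add: c_def)
  have dens: "cube_density blk N eps (u - z) = c * indicator (cbox (z - e) (z + e)) u" for u z
  proof -
    have "(u - z \<in> cube_product blk eps) = (u \<in> cbox (z - e) (z + e))"
      unfolding cube_product_def mem_box_cart by (auto simp: e_def abs_le_iff algebra_simps)
    then show ?thesis unfolding cube_density_def c_def V_eq by (simp add: indicator_def)
  qed
  define A where "A = cbox (x - e) (x + e)"
  define B where "B = cbox (y - e) (y + e)"
  define lo :: "real^'n" where "lo = (\<chi> j. max (x $ j) (y $ j) - e $ j)"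
  define hi :: "real^'n" where "hi = (\<chi> j. min (x $ j) (y $ j) + e $ j)"
  define K where "K = cbox lo hi"
  have KAB: "K \<subseteq> A \<inter> B"
  proof
    fix u assume "u \<in> K"
    then have h: "max (x $ i) (y $ i) - e $ i \<le> u $ i \<and> u $ i \<le> min (x $ i) (y $ i) + e $ i" for i
      unfolding K_def by (auto simp: mem_box_cart lo_def hi_def)
    have "x $ i - e $ i \<le> u $ i \<and> u $ i \<le> x $ i + e $ i \<and> y $ i - e $ i \<le> u $ i \<and> u $ i \<le> y $ i + e $ i" for i
      using h[of i] by linarith
    then show "u \<in> A \<inter> B" unfolding A_def B_def by (auto simp: mem_box_cart)
  qed
  have mA: "measure lborel A = V"
  proof -
    have "cbox (x - e) (x + e) \<noteq> {}" using epos
      by (auto simp: box_ne_empty(1) cart_eq_inner_axis[symmetric] Basis_vec_def less_imp_le)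
    then show ?thesis unfolding A_def V_def by (simp add: content_cbox_cart)
  qed
  have mB: "measure lborel B = V"
  proof -
    have "cbox (y - e) (y + e) \<noteq> {}" using epos
      by (auto simp: box_ne_empty(1) cart_eq_inner_axis[symmetric] Basis_vec_def less_imp_le)
    then show ?thesis unfolding B_def V_def by (simp add: content_cbox_cart)
  qed
  have intg: "integrable lborel (indicator S :: real^'n \<Rightarrow> real)" if "S = cbox a b" for S a b
    using that by (intro integrable_real_indicator) (auto simp: emeasure_lborel_cbox_finite[unfolded infinity_ennreal_def])
  let ?F = "\<lambda>u. \<bar>c * indicator A u - c * indicator B u\<bar>"
  let ?G = "\<lambda>u. c * indicator A u + c * indicator B u - 2 * c * (indicator K u :: real)"
  have pw: "?F u \<le> ?G u" for u
    using KAB cpos by (auto simp: indicator_def)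
  have iF: "integrable lborel ?F"
    using intg[OF A_def] intg[OF B_def] by (intro integrable_abs) simp
  have iG: "integrable lborel ?G"
    using intg[OF A_def] intg[OF B_def] intg[OF K_def]
    by simp
  have "(LINT u|lborel. \<bar>cube_density blk N eps (u - x) - cube_density blk N eps (u - y)\<bar>)
        = (LINT u|lborel. ?F u)"
    by (simp add: dens A_def B_def)
  also have "\<dots> \<le> (LINT u|lborel. ?G u)"
    using iF iG pw by (intro integral_mono) auto
  also have "(LINT u|lborel. ?G u) = c * V + c * V - 2 * c * measure lborel K"
    using intg[OF A_def] intg[OF B_def] intg[OF K_def] mA mB
    by (simp add: integral_diff integral_add integrable_mult_right)
  finally have I1: "(LINT u|lborel. \<bar>cube_density blk N eps (u - x) - cube_density blk N eps (u - y)\<bar>)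
        \<le> 2 - 2 * c * measure lborel K" using Vpos by (simp add: c_def)
  let ?d = "x - y"
  have Sd: "(\<Sum>j\<in>UNIV. \<bar>?d $ j\<bar>) / m \<le> sqrt (real CARD('n)) / m * norm ?d"
    using sum_abs_le_sqrt_card_norm[of ?d] mpos by (simp add: divide_right_mono)
  show ?thesis
  proof (cases "\<forall>j. \<bar>?d $ j\<bar> \<le> 2 * e $ j")
    case True
    have Kne: "K \<noteq> {}"
    proof -
      have "lo $ i \<le> hi $ i" for i using True[rule_format, of i] by (simp add: lo_def hi_def) linarith
      then have "lo \<in> K" by (simp add: K_def mem_box_cart)
      then show ?thesis by blast
    qed
    have len: "hi $ j - lo $ j = 2 * e $ j - \<bar>?d $ j\<bar>" for j
      by (simp add: lo_def hi_def)
    have mK: "measure lborel K = (\<Prod>j\<in>UNIV. 2 * e $ j - \<bar>?d $ j\<bar>)"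
      using Kne unfolding K_def by (simp add: content_cbox_cart len)
    define a where "a j = \<bar>?d $ j\<bar> / (2 * e $ j)" for j
    have a01: "0 \<le> a j \<and> a j \<le> 1" for j using True epos[of j] by (simp add: a_def)
    have "c * measure lborel K = (\<Prod>j\<in>UNIV. 1 - a j)"
    proof -
      have "c * measure lborel K = (\<Prod>j\<in>UNIV. 2 * e $ j - \<bar>?d $ j\<bar>) / (\<Prod>j\<in>UNIV. 2 * e $ j)"
        by (simp add: c_def V_def mK)
      also have "\<dots> = (\<Prod>j\<in>UNIV. (2 * e $ j - \<bar>?d $ j\<bar>) / (2 * e $ j))"
        by (simp add: prod_dividef)
      also have "\<dots> = (\<Prod>j\<in>UNIV. 1 - a j)"
        using epos by (intro prod.cong refl) (simp add: a_def diff_divide_distrib less_imp_neq[symmetric])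
      finally show ?thesis .
    qed
    then have "2 - 2 * c * measure lborel K = 2 * (1 - (\<Prod>j\<in>UNIV. 1 - a j))" by simp
    also have "\<dots> \<le> 2 * (\<Sum>j\<in>UNIV. a j)"
      using one_minus_prod_le_sum[of UNIV a] a01 by simp
    also have "\<dots> = (\<Sum>j\<in>UNIV. \<bar>?d $ j\<bar> / e $ j)"
      by (simp add: a_def sum_distrib_left)
    also have "\<dots> \<le> (\<Sum>j\<in>UNIV. \<bar>?d $ j\<bar> / m)"
      using epos mpos m_le by (intro sum_mono divide_left_mono) auto
    also have "\<dots> = (\<Sum>j\<in>UNIV. \<bar>?d $ j\<bar>) / m" by (simp add: sum_divide_distrib)
    finally show ?thesis using I1 Sd by (simp add: m_def)
  next
    case False
    then obtain j where j: "2 * e $ j < \<bar>?d $ j\<bar>" using not_le by blast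
    have "2 - 2 * c * measure lborel K \<le> 2" using cpos by simp
    also have "2 \<le> \<bar>?d $ j\<bar> / m"
    proof -
      have "2 * m \<le> 2 * e $ j" using m_le by simp
      then have "2 * m \<le> \<bar>?d $ j\<bar>" using j by simp
      then show ?thesis using mpos by (simp add: field_simps)
    qed
    also have "\<dots> \<le> (\<Sum>j\<in>UNIV. \<bar>?d $ j\<bar>) / m"
      using mpos by (intro divide_right_mono member_le_sum) auto
    finally show ?thesis using I1 Sd by (simp add: m_def)
  qed
qed

end
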